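(* Let $G$ be an odd unicyclic graph on $n$ vertices $1,2,\ldots,n$ with cycle $C$, let $Q$ be its signless Laplacian and $Q^{-1}=[q^+_{i,j}]$ its inverse. Then a vertex $i$ is in $C$ if and only if $q^+_{i,i}=\frac{|C|}{4}$.
   Context: A unicyclic graph on $n$ vertices is a simple connected graph with $n$ edges; it is odd if its unique cycle $C$ has odd length. The signless Laplacian is $Q=D+A$ ($A$ adjacency matrix, $D$ diagonal degree matrix); it is invertible for such graphs. $|C|$ is the number of vertices of $C$. *)

theory Defs
  imports "HOL-Analysis.Analysis"
begin

text \<open>Simple graphs on the finite vertex type 'n (vertices 1..n, n = CARD('n)),
given by a symmetric irreflexive adjacency relation E.\<close>

definition simple_graph :: "('n \<Rightarrow> 'n \<Rightarrow> bool) \<Rightarrow> bool" where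
  "simple_graph E \<longleftrightarrow> (\<forall>u v. E u v \<longrightarrow> E v u) \<and> (\<forall>u. \<not> E u u)"

definition edges :: "('n \<Rightarrow> 'n \<Rightarrow> bool) \<Rightarrow> 'n set set" where
  "edges E = {{u, v} | u v. E u v}"

definition connected_graph :: "('n \<Rightarrow> 'n \<Rightarrow> bool) \<Rightarrow> bool" where
  "connected_graph E \<longleftrightarrow> (\<forall>u v. E\<^sup>*\<^sup>* u v)"

definition unicyclic :: "('n::finite \<Rightarrow> 'n \<Rightarrow> bool) \<Rightarrow> bool" where
  "unicyclic E \<longleftrightarrow> simple_graph E \<and> connected_graph E \<and> card (edges E) = CARD('n)"

definition is_cycle :: "('n \<Rightarrow> 'n \<Rightarrow> bool) \<Rightarrow> 'n list \<Rightarrow> bool" where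
  "is_cycle E cs \<longleftrightarrow> length cs \<ge> 3 \<and> distinct cs \<and>
     (\<forall>i < length cs. E (cs ! i) (cs ! ((i + 1) mod length cs)))"

definition adj_matrix :: "('n::finite \<Rightarrow> 'n \<Rightarrow> bool) \<Rightarrow> real^'n^'n" where
  "adj_matrix E = (\<chi> i j. if E i j then 1 else 0)"

definition degree :: "('n::finite \<Rightarrow> 'n \<Rightarrow> bool) \<Rightarrow> 'n \<Rightarrow> nat" where
  "degree E v = card {w. E v w}"

definition deg_matrix :: "('n::finite \<Rightarrow> 'n \<Rightarrow> bool) \<Rightarrow> real^'n^'n" where
  "deg_matrix E = (\<chi> i j. if i = j then real (degree E i) else 0)"

definition signless_laplacian :: "('n::finite \<Rightarrow> 'n \<Rightarrow> bool) \<Rightarrow> real^'n^'n" where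
  "signless_laplacian E = deg_matrix E + adj_matrix E"

end

theory Submission imports Defs begin

lemma edges_finite: "finite (edges (E::'n::finite \<Rightarrow> 'n \<Rightarrow> bool))"
  by (rule finite_subset[of _ UNIV]) auto

lemma card_inc:
  fixes E :: "'n::finite \<Rightarrow> 'n \<Rightarrow> bool"
  assumes sg: "simple_graph E"
  shows "card {e\<in>edges E. u\<in>e \<and> v\<in>e} = (if u = v then degree E u else if E u v then 1 else 0)"
proof (cases "u = v")
  case True
  have "bij_betw (\<lambda>w. {u,w}) {w. E u w} {e\<in>edges E. u\<in>e \<and> v\<in>e}"
    unfolding bij_betw_def
  proof
    show "inj_on (\<lambda>w. {u, w}) {w. E u w}" by (auto simp: inj_on_def doubleton_eq_iff)
    show "(\<lambda>w. {u, w}) ` {w. E u w} = {e \<in> edges E. u \<in> e \<and> v \<in> e}"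
    proof safe
      fix e assume "e \<in> edges E" "u \<in> e" "v \<in> e"
      then obtain a b where ab: "e = {a,b}" "E a b" unfolding edges_def by auto
      show "e \<in> (\<lambda>w. {u, w}) ` {w. E u w}"
      proof (cases "u = a")
        case True then show ?thesis using ab by auto
      next
        case False then have "u = b" using ab \<open>u\<in>e\<close> by auto
        then show ?thesis using ab sg unfolding simple_graph_def by (auto intro!: image_eqI[of _ _ a])
      qed
    qed (auto simp: edges_def True)
  qed
  then show ?thesis using True by (simp add: degree_def bij_betw_same_card)
next
  case False
  have "{e\<in>edges E. u\<in>e \<and> v\<in>e} = (if E u v then {{u,v}} else {})"
    using False sg unfolding simple_graph_def edges_def by auto
  then show ?thesis using False by simp
qed


lemma core:
  fixes E :: "'n::finite \<Rightarrow> 'n \<Rightarrow> bool" and X :: "'n set \<Rightarrow> real"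
  assumes sg: "simple_graph E" and cardE: "card (edges E) = CARD('n)"
    and injy: "\<forall>y::'n\<Rightarrow>real. (\<forall>u v. E u v \<longrightarrow> y u + y v = 0) \<longrightarrow> (\<forall>v. y v = 0)"
    and X: "\<forall>v. (\<Sum>e\<in>edges E. if v \<in> e then X e else 0) = (if v = i then 1 else 0)"
  shows "matrix_inv (signless_laplacian E) $ i $ i = (\<Sum>e\<in>edges E. (X e)^2)"
proof -
  obtain f where bij: "bij_betw f (UNIV::'n set) (edges E)"
    using finite_same_card_bij[of "UNIV::'n set" "edges E"] edges_finite cardE by auto
  define M :: "real^'n^'n" where "M = (\<chi> a v. if v \<in> f a then 1 else 0)"
  define Q where "Q = signless_laplacian E"
  have fE: "f a \<in> edges E" for a using bij by (auto simp: bij_betw_def)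
  have Mv: "(M *v y) $ a = (\<Sum>v\<in>f a. y $ v)" for y a
  proof -
    have "(M *v y) $ a = (\<Sum>v\<in>UNIV. if v \<in> f a then y $ v else 0)"
      unfolding M_def matrix_vector_mult_def by (auto intro!: sum.cong)
    also have "\<dots> = (\<Sum>v\<in>f a. y $ v)" by (simp add: sum.If_cases Int_absorb1)
    finally show ?thesis .
  qed
  have QM: "transpose M ** M = Q"
  proof -
    have "(transpose M ** M) $ u $ v = Q $ u $ v" for u v
    proof -
      have "(transpose M ** M) $ u $ v = (\<Sum>a\<in>UNIV. (\<lambda>e. if u\<in>e \<and> v\<in>e then 1 else 0) (f a))"
        unfolding M_def matrix_matrix_mult_def transpose_def by (auto intro!: sum.cong)
      also have "\<dots> = (\<Sum>e\<in>edges E. if u\<in>e \<and> v\<in>e then 1 else (0::real))"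
        by (rule sum.reindex_bij_betw[OF bij])
      also have "\<dots> = real (card {e\<in>edges E. u\<in>e \<and> v\<in>e})"
        by (simp add: sum.If_cases edges_finite Int_def conj_commute)
      also have "\<dots> = Q $ u $ v"
        unfolding card_inc[OF sg] Q_def signless_laplacian_def deg_matrix_def adj_matrix_def
        using sg by (auto simp: simple_graph_def)
      finally show ?thesis .
    qed
    then show ?thesis by (simp add: vec_eq_iff)
  qed
  have Minj: "M *v y = 0 \<Longrightarrow> y = 0" for y
  proof -
    assume y0: "M *v y = 0"
    have "\<forall>u v. E u v \<longrightarrow> y $ u + y $ v = 0"
    proof safe
      fix u v assume "E u v"
      then have "{u,v} \<in> edges E" "u \<noteq> v" using sg by (auto simp: edges_def simple_graph_def)
      then obtain a where "f a = {u,v}" using bij by (metis bij_betw_iff_bijections)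
      then show "y $ u + y $ v = 0" using Mv[of y a] y0 \<open>u\<noteq>v\<close> by simp
    qed
    moreover have "(\<forall>u v. E u v \<longrightarrow> y $ u + y $ v = 0) \<longrightarrow> (\<forall>v. y $ v = 0)"
      using spec[OF injy, of "\<lambda>v. y $ v"] by blast
    ultimately have "\<forall>v. y $ v = 0" by blast
    then show "y = 0" by (simp add: vec_eq_iff)
  qed
  have invM: "invertible M"
    using Minj invertible_left_inverse matrix_left_invertible_ker by blast
  have invMt: "invertible (transpose M)" by (rule transpose_invertible[OF invM])
  have invQ: "invertible Q" using QM invertible_mult[OF invMt invM] by simp
  have QQi: "Q ** matrix_inv Q = mat 1"
    using invQ unfolding invertible_def matrix_inv_def by (rule someI_ex[where P="\<lambda>A'. Q ** A' = mat 1 \<and> A' ** Q = mat 1", THEN conjunct1])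
  define y where "y = matrix_inv Q *v axis i 1"
  have yi: "y $ i = matrix_inv Q $ i $ i"
    unfolding y_def matrix_vector_mult_def axis_def by (simp add: if_distrib cong: if_cong)
  have Qy: "Q *v y = axis i 1"
    unfolding y_def matrix_vector_mul_assoc QQi by simp
  define x where "x = M *v y"
  have Mtx: "transpose M *v x = axis i 1"
    using Qy unfolding x_def matrix_vector_mul_assoc QM .
  define x0 :: "real^'n" where "x0 = (\<chi> a. X (f a))"
  have Mtx0: "transpose M *v x0 = axis i 1"
  proof -
    have "(transpose M *v x0) $ v = axis i 1 $ v" for v
    proof -
      have "(transpose M *v x0) $ v = (\<Sum>a\<in>UNIV. (\<lambda>e. if v \<in> e then X e else 0) (f a))"
        unfolding M_def x0_def matrix_vector_mult_def transpose_def by (auto intro!: sum.cong)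
      also have "\<dots> = (\<Sum>e\<in>edges E. if v \<in> e then X e else 0)"
        by (rule sum.reindex_bij_betw[OF bij])
      finally show ?thesis using X by (simp add: axis_def)
    qed
    then show ?thesis by (simp add: vec_eq_iff)
  qed
  have "x = x0"
    using inj_matrix_vector_mult[OF invMt] Mtx Mtx0 by (auto simp: inj_def)
  have "y $ i = inner (transpose M *v x) y"
    unfolding Mtx by (simp add: cart_eq_inner_axis inner_commute)
  also have "\<dots> = inner x x"
    by (simp add: dot_lmul_matrix x_def)
  also have "\<dots> = (\<Sum>a\<in>UNIV. (\<lambda>e. (X e)^2) (f a))"
    unfolding \<open>x = x0\<close> x0_def inner_vec_def by (simp add: power2_eq_square)
  also have "\<dots> = (\<Sum>e\<in>edges E. (X e)^2)"
    by (rule sum.reindex_bij_betw[OF bij])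
  finally show ?thesis using yi Q_def by simp
qed


fun pathw :: "'a list \<Rightarrow> ('a set \<times> real) list" where
  "pathw [] = []"
| "pathw [x] = []"
| "pathw (x # y # xs) = ({x,y}, 1) # map (\<lambda>(e,w). (e, - w)) (pathw (y # xs))"

definition FL :: "('a set \<times> real) list \<Rightarrow> 'a \<Rightarrow> real" where
  "FL L v = sum_list (map (\<lambda>(e,w). if v \<in> e then w else 0) L)"
definition XL :: "('a set \<times> real) list \<Rightarrow> 'a set \<Rightarrow> real" where
  "XL L e = sum_list (map (\<lambda>(e',w). if e' = e then w else 0) L)"
definition SQ :: "('a set \<times> real) list \<Rightarrow> real" where
  "SQ L = sum_list (map (\<lambda>(e,w). w^2) L)"
definition scale :: "real \<Rightarrow> ('a set \<times> real) list \<Rightarrow> ('a set \<times> real) list" where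
  "scale c L = map (\<lambda>(e,w). (e, c * w)) L"

lemma FL_simps [simp]: "FL [] v = 0" "FL ((e,w) # L) v = (if v \<in> e then w else 0) + FL L v"
  "FL (L1 @ L2) v = FL L1 v + FL L2 v"
  by (auto simp: FL_def)
lemma SQ_simps [simp]: "SQ [] = 0" "SQ ((e,w) # L) = w^2 + SQ L" "SQ (L1 @ L2) = SQ L1 + SQ L2"
  by (auto simp: SQ_def)
lemma XL_simps [simp]: "XL [] e = 0" "XL ((e',w) # L) e = (if e' = e then w else 0) + XL L e"
  by (auto simp: XL_def)

lemma FL_scale [simp]: "FL (scale c L) v = c * FL L v"
  by (induction L) (auto simp: scale_def algebra_simps)
lemma SQ_scale [simp]: "SQ (scale c L) = c^2 * SQ L"
  by (induction L) (auto simp: scale_def power_mult_distrib algebra_simps)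
lemma fst_scale [simp]: "map fst (scale c L) = map fst L"
  by (induction L) (auto simp: scale_def)
lemma scale_neg: "map (\<lambda>(e,w). (e, - w)) L = scale (-1) L"
  by (simp add: scale_def)

lemma XL_notin: "e \<notin> set (map fst L) \<Longrightarrow> XL L e = 0"
proof (induction L)
  case (Cons p L)
  obtain a b where p: "p = (a,b)" by fastforce
  then have "a \<noteq> e" using Cons.prems by auto
  then show ?case using Cons p by simp
qed simp

lemma list_lemma:
  fixes E :: "'n::finite \<Rightarrow> 'n \<Rightarrow> bool" and L :: "('n set \<times> real) list"
  assumes "set (map fst L) \<subseteq> edges E"
  shows "(\<Sum>e\<in>edges E. if v \<in> e then XL L e else 0) = FL L v"
  using assms
proof (induction L)
  case Nil
  have X0: "XL [] e = 0" for e :: "'n set" by simp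
  show ?case by (simp only: FL_simps X0 if_cancel sum.neutral_const)
next
  case (Cons p L)
  obtain e0 w0 where p: "p = (e0,w0)" by fastforce
  have e0: "e0 \<in> edges E" using Cons.prems p by auto
  have "(\<Sum>e\<in>edges E. if v \<in> e then XL (p # L) e else 0)
     = (\<Sum>e\<in>edges E. (if v \<in> e \<and> e = e0 then w0 else 0)) + (\<Sum>e\<in>edges E. if v \<in> e then XL L e else 0)"
    unfolding sum.distrib[symmetric] p by (auto intro!: sum.cong)
  also have "(\<Sum>e\<in>edges E. (if v \<in> e \<and> e = e0 then w0 else 0)) = (if v \<in> e0 then w0 else 0)"
  proof -
    have "(\<Sum>e\<in>edges E. (if v \<in> e \<and> e = e0 then w0 else 0)) = (\<Sum>e\<in>edges E. (if e0 = e then (if v \<in> e0 then w0 else 0) else 0))"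
      by (rule sum.cong) auto
    also have "\<dots> = (if v \<in> e0 then w0 else 0)" by (rule trans[OF sum.delta'[OF edges_finite]]) (simp add: e0)
    finally show ?thesis .
  qed
  finally show ?case using Cons p by auto
qed

lemma list_sq:
  fixes E :: "'n::finite \<Rightarrow> 'n \<Rightarrow> bool" and L :: "('n set \<times> real) list"
  assumes "set (map fst L) \<subseteq> edges E" "distinct (map fst L)"
  shows "(\<Sum>e\<in>edges E. (XL L e)^2) = SQ L"
  using assms
proof (induction L)
  case Nil then show ?case by simp
next
  case (Cons p L)
  obtain e0 w0 where p: "p = (e0,w0)" by fastforce
  have e0: "e0 \<in> edges E" and nin: "e0 \<notin> set (map fst L)" using Cons.prems p by auto
  have "(\<Sum>e\<in>edges E. (XL (p # L) e)^2)
     = (\<Sum>e\<in>edges E. (if e = e0 then w0^2 else 0)) + (\<Sum>e\<in>edges E. (XL L e)^2)"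
    unfolding sum.distrib[symmetric] p
  proof (intro sum.cong refl)
    fix e show "(XL ((e0, w0) # L) e)\<^sup>2 = (if e = e0 then w0\<^sup>2 else 0) + (XL L e)\<^sup>2"
      using XL_notin[OF nin] by (cases "e = e0") auto
  qed
  also have "(\<Sum>e\<in>edges E. (if e = e0 then w0^2 else 0)) = w0^2"
    using e0 edges_finite[of E] by (simp add: sum.delta')
  finally show ?case using Cons p by auto
qed

lemma pathw_F:
  assumes "P \<noteq> []" "successively (\<noteq>) P"
  shows "FL (pathw P) v = (if v = hd P then 1 else 0) + (-1)^length P * (if v = last P then 1 else 0)"
  using assms
proof (induction P rule: pathw.induct)
  case (3 x y xs)
  then show ?case by (auto simp: scale_neg)
qed auto

lemma pathw_SQ: "SQ (pathw P) = real (length P - 1)"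
  by (induction P rule: pathw.induct) (auto simp: scale_neg)

lemma pathw_fst: "map fst (pathw (x # y # xs)) = {x,y} # map fst (pathw (y # xs))"
  by (simp add: scale_neg)

lemma pathw_edges: "successively E P \<Longrightarrow> set (map fst (pathw P)) \<subseteq> edges E"
  by (induction P rule: pathw.induct) (auto simp: pathw_fst edges_def pathw.simps(1,2) simp del: pathw.simps(3))

lemma pathw_sub: "e \<in> set (map fst (pathw P)) \<Longrightarrow> e \<subseteq> set P"
  by (induction P rule: pathw.induct) (auto simp: pathw_fst pathw.simps(1,2) simp del: pathw.simps(3))

lemma pathw_distinct: "distinct P \<Longrightarrow> distinct (map fst (pathw P))"
proof (induction P rule: pathw.induct)
  case (3 x y xs)
  then show ?case using pathw_sub[of "{x,y}" "y # xs"]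
    by (auto simp: pathw_fst pathw.simps(1,2) simp del: pathw.simps(3))
qed auto

lemma last_ne_hd: "distinct ys \<Longrightarrow> length ys \<ge> 2 \<Longrightarrow> last ys \<noteq> hd ys"
  by (cases ys) (auto simp: last_in_set)

definition cyc :: "'a list \<Rightarrow> ('a set \<times> real) list" where
  "cyc D = scale (1/2) (pathw D @ [({last D, hd D}, 1)])"

lemma cyc_F:
  assumes "distinct D" "length D \<ge> 3" "odd (length D)"
  shows "FL (cyc D) v = (if v = hd D then 1 else 0)"
proof -
  have "D \<noteq> []" using assms by auto
  moreover have "successively (\<noteq>) D"
    using assms(1) by (induction D rule: pathw.induct) auto
  moreover have "last D \<noteq> hd D" using last_ne_hd[of D] assms by auto
  ultimately show ?thesis using assms unfolding cyc_def by (auto simp: pathw_F)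
qed

lemma cyc_SQ: "length D \<ge> 1 \<Longrightarrow> SQ (cyc D) = real (length D) / 4"
  unfolding cyc_def by (simp add: pathw_SQ power2_eq_square of_nat_diff)

lemma cyc_sub: "e \<in> set (map fst (cyc D)) \<Longrightarrow> D \<noteq> [] \<Longrightarrow> e \<subseteq> set D"
  unfolding cyc_def using pathw_sub[of e D] by auto

lemma cyc_edges: "successively E D \<Longrightarrow> E (last D) (hd D) \<Longrightarrow> set (map fst (cyc D)) \<subseteq> edges E"
  unfolding cyc_def using pathw_edges[of E D] by (auto simp: edges_def)

lemma cyc_distinct:
  assumes "distinct D" "length D \<ge> 3"
  shows "distinct (map fst (cyc D))"
proof -
  obtain x y zs where D: "D = x # y # zs" using assms by (cases D rule: pathw.cases) auto
  have ne: "last (y # zs) \<noteq> hd (y # zs)" using last_ne_hd[of "y#zs"] assms D by auto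
  have "{last D, hd D} \<notin> set (map fst (pathw D))"
  proof
    assume a: "{last D, hd D} \<in> set (map fst (pathw D))"
    have lx: "last D = last (y#zs)" "hd D = x" using D by auto
    have xn: "x \<notin> set (y # zs)" using assms D by auto
    show False
    proof (cases "{last D, hd D} = {x,y}")
      case True
      then have "last (y#zs) = y" using lx xn by (auto simp: doubleton_eq_iff)
      then show False using ne by simp
    next
      case False
      then have "{last D, hd D} \<in> set (map fst (pathw (y#zs)))"
        using a D by (simp add: pathw_fst del: pathw.simps)
      then show False using pathw_sub xn lx by fastforce
    qed
  qed
  then show ?thesis using pathw_distinct[OF assms(1)] unfolding cyc_def by simp
qed


fun walkto :: "('a \<Rightarrow> 'a \<Rightarrow> bool) \<Rightarrow> 'a set \<Rightarrow> 'a list \<Rightarrow> bool" where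
  "walkto E S [] = False"
| "walkto E S [x] = (x \<in> S)"
| "walkto E S (x # y # xs) = (E x y \<and> x \<notin> S \<and> walkto E S (y # xs))"

lemma walkto_suffix: "walkto E S (xs @ ys) \<Longrightarrow> ys \<noteq> [] \<Longrightarrow> walkto E S ys"
proof (induction xs)
  case (Cons a xs)
  then show ?case by (cases "xs @ ys") auto
qed simp

lemma walkto_props: "walkto E S P \<Longrightarrow> P \<noteq> [] \<and> successively E P \<and> last P \<in> S"
  by (induction E S P rule: walkto.induct) auto

lemma walkto_edges: "walkto E S P \<Longrightarrow> e \<in> set (map fst (pathw P)) \<Longrightarrow> \<not> e \<subseteq> S"
  by (induction E S P rule: walkto.induct) (auto simp: pathw_fst pathw.simps(1,2) simp del: pathw.simps(3))

lemma walk_exists: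
  assumes "E\<^sup>*\<^sup>* u t" "t \<in> S"
  shows "\<exists>P. walkto E S P \<and> distinct P \<and> hd P = u"
  using assms
proof (induction rule: converse_rtranclp_induct)
  case base
  then show ?case by (intro exI[of _ "[t]"]) auto
next
  case (step u w)
  then obtain P where P: "walkto E S P" "distinct P" "hd P = w" by auto
  show ?case
  proof (cases "u \<in> S")
    case True then show ?thesis by (intro exI[of _ "[u]"]) auto
  next
    case uS: False
    show ?thesis
    proof (cases "u \<in> set P")
      case True
      then obtain xs ys where P': "P = xs @ u # ys" by (meson split_list)
      then have "walkto E S (u # ys)" using walkto_suffix P by blast
      moreover have "distinct (u # ys)" using P P' by auto
      ultimately show ?thesis by auto
    next
      case False
      obtain ys where "P = w # ys" using P by (cases P) auto
      then have "walkto E S (u # P)" using P step uS by simp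
      then show ?thesis using P False by (intro exI[of _ "u # P"]) auto
    qed
  qed
qed

lemma nth_successively:
  "(\<forall>j. Suc j < length xs \<longrightarrow> R (xs ! j) (xs ! Suc j)) \<Longrightarrow> successively R xs"
proof (induction xs rule: pathw.induct)
  case (3 x y xs)
  have "\<forall>j. Suc j < length (y # xs) \<longrightarrow> R ((y # xs) ! j) ((y # xs) ! Suc j)"
    using "3.prems" by (metis Suc_less_eq length_Cons nth_Cons_Suc)
  then show ?case using "3" by fastforce
qed auto

lemma cycle_props:
  assumes "is_cycle E C"
  shows "successively E C \<and> E (last C) (hd C) \<and> distinct C \<and> length C \<ge> 3"
proof -
  have k: "length C \<ge> 3" "distinct C" using assms by (auto simp: is_cycle_def)
  have "successively E C"
  proof (intro nth_successively allI impI)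
    fix j assume j: "Suc j < length C"
    then have "j < length C" by simp
    then have "E (C ! j) (C ! (Suc j mod length C))" using assms unfolding is_cycle_def by simp
    then show "E (C ! j) (C ! Suc j)" using j by simp
  qed
  moreover have "E (last C) (hd C)"
  proof -
    have "E (C ! (length C - 1)) (C ! ((length C - 1 + 1) mod length C))"
      using assms k unfolding is_cycle_def by auto
    moreover have "(length C - 1 + 1) mod length C = 0"
    proof -
      have "length C - 1 + 1 = length C" using k by simp
      then show ?thesis by simp
    qed
    moreover have "C \<noteq> []" using k by auto
    ultimately show ?thesis by (simp add: last_conv_nth hd_conv_nth)
  qed
  ultimately show ?thesis using k by auto
qed

lemma rotate_cycle:
  assumes "successively E C" "E (last C) (hd C)" "distinct C" "r \<in> set C"
  shows "\<exists>D. successively E D \<and> E (last D) (hd D) \<and> distinct D \<and> set D = set C \<and> length D = length C \<and> hd D = r"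
proof -
  obtain xs ys where C: "C = xs @ r # ys" using assms(4) by (meson split_list)
  define D where "D = (r # ys) @ xs"
  have s1: "successively E (r # ys)" "successively E xs" "xs \<noteq> [] \<longrightarrow> E (last xs) r"
    using assms(1) unfolding C successively_append_iff by auto
  have "successively E D"
    unfolding D_def successively_append_iff using s1 assms(2) C by (cases xs) auto
  moreover have "E (last D) (hd D)"
    using s1 assms(2) C by (cases xs) (auto simp: D_def)
  ultimately show ?thesis using assms(3) C by (intro exI[of _ D]) (auto simp: D_def)
qed

lemma alt_sign:
  assumes "successively E P" "P \<noteq> []" "\<forall>u v. E u v \<longrightarrow> y u + y v = (0::real)"
  shows "y (last P) = (-1)^(length P - 1) * y (hd P)"
  using assms
proof (induction P rule: pathw.induct)
  case (3 x z xs)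
  have "successively E (z # xs)" using "3.prems"(1) by simp
  then have "y (last (z # xs)) = (-1)^(length xs) * y z" using "3.IH" "3.prems"(3) by simp
  moreover have "E x z" using "3.prems"(1) by simp
  then have "y x + y z = 0" using "3.prems"(3) by blast
  then have "y z = - y x" by linarith
  ultimately show ?case by simp
qed auto

theorem mainTheorem13:
  fixes E :: "'n::finite \<Rightarrow> 'n \<Rightarrow> bool" and C :: "'n list" and i :: 'n
  assumes "unicyclic E"
    and "is_cycle E C"
    and "odd (length C)"
  shows "i \<in> set C \<longleftrightarrow> matrix_inv (signless_laplacian E) $ i $ i = real (length C) / 4"
proof -
  have sg: "simple_graph E" and conn: "connected_graph E" and cardE: "card (edges E) = CARD('n)"
    using assms(1) by (auto simp: unicyclic_def)
  have cp: "successively E C" "E (last C) (hd C)" "distinct C" "length C \<ge> 3"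
    using cycle_props[OF assms(2)] by auto
  have ne: "(\<noteq>) x y" if "E x y" for x y using sg that by (auto simp: simple_graph_def)
  have injy: "\<forall>y::'n\<Rightarrow>real. (\<forall>u v. E u v \<longrightarrow> y u + y v = 0) \<longrightarrow> (\<forall>v. y v = 0)"
  proof (intro allI impI)
    fix y :: "'n \<Rightarrow> real" assume hy: "\<forall>u v. E u v \<longrightarrow> y u + y v = 0"
    have "y (last C) = (-1)^(length C - 1) * y (hd C)"
    proof -
      have "C \<noteq> []" using cp(4) by auto
      then show ?thesis using alt_sign[OF cp(1) _ hy] by blast
    qed
    moreover have "even (length C - 1)" using assms(3) cp(4) by simp
    ultimately have "y (last C) = y (hd C)" by simp
    moreover have "y (last C) + y (hd C) = 0" using hy cp(2) by auto
    ultimately have h0: "y (hd C) = 0" by simp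
    show "y v = 0" for v
    proof -
      have "E\<^sup>*\<^sup>* (hd C) v" using conn by (simp add: connected_graph_def)
      then show "y v = 0"
      proof (induction rule: rtranclp_induct)
        case base then show ?case using h0 .
      next
        case (step a b) then show ?case using hy by (metis add_0)
      qed
    qed
  qed
  have cyc_l: "length D \<ge> 3" "odd (length D)" if "length D = length C" for D :: "'n list"
    using that cp(4) assms(3) by auto
  have cyc_F': "FL (cyc D) v = (if v = hd D then 1 else 0)"
    if "distinct D" "length D = length C" for D :: "'n list" and v
    using cyc_F[OF that(1) cyc_l[OF that(2)]] .
  have cyc_S': "SQ (cyc D) = real (length C) / 4" if "length D = length C" for D :: "'n list"
    using cyc_SQ[of D] cyc_l[OF that] that by simp
  have cyc_E': "set (map fst (cyc D)) \<subseteq> edges E" if "successively E D" "E (last D) (hd D)" for D :: "'n list"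
    using cyc_edges[OF that] .
  have cyc_D': "distinct (map fst (cyc D))" if "distinct D" "length D = length C" for D :: "'n list"
    using cyc_distinct[OF that(1) cyc_l(1)[OF that(2)]] .
  show ?thesis
  proof (cases "i \<in> set C")
    case True
    then obtain D where D: "successively E D" "E (last D) (hd D)" "distinct D" "set D = set C"
      "length D = length C" "hd D = i"
      using rotate_cycle[OF cp(1-3)] by blast
    have co: "FL (cyc D) v = (if v = i then 1 else 0)" for v using cyc_F'[OF D(3,5), of v] D(6) by simp
    have ce: "set (map fst (cyc D)) \<subseteq> edges E" "distinct (map fst (cyc D))" "SQ (cyc D) = real (length C) / 4"
      using cyc_E'[OF D(1,2)] cyc_D'[OF D(3,5)] cyc_S'[OF D(5)] by blast+
    have "\<forall>v. (\<Sum>e\<in>edges E. if v \<in> e then XL (cyc D) e else 0) = (if v = i then 1 else 0)"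
      using list_lemma[OF ce(1)] co by simp
    then have "matrix_inv (signless_laplacian E) $ i $ i = (\<Sum>e\<in>edges E. (XL (cyc D) e)^2)"
      by (rule core[OF sg cardE injy])
    also have "\<dots> = real (length C) / 4"
      using list_sq[OF ce(1,2)] ce(3) by simp
    finally show ?thesis using True by simp
  next
    case False
    have "E\<^sup>*\<^sup>* i (hd C)" using conn by (simp add: connected_graph_def)
    moreover have "hd C \<in> set C" using cp(4) by (cases C) auto
    ultimately obtain P where P: "walkto E (set C) P" "distinct P" "hd P = i"
      using walk_exists[of E i "hd C" "set C"] by blast
    have Pp: "P \<noteq> []" "successively E P" "last P \<in> set C" using walkto_props[OF P(1)] by auto
    have lenP: "length P \<ge> 2"
    proof (cases P)
      case (Cons a list)
      then have "list \<noteq> []" using Pp(3) False P(3) by auto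
      then show ?thesis using Cons by (cases list) auto
    qed (use Pp(1) in simp)
    obtain D where D: "successively E D" "E (last D) (hd D)" "distinct D" "set D = set C"
      "length D = length C" "hd D = last P"
      using rotate_cycle[OF cp(1-3) Pp(3)] by blast
    define s :: real where "s = - ((-1)^length P)"
    define L where "L = pathw P @ scale s (cyc D)"
    have sP: "successively (\<noteq>) P"
      by (rule successively_mono[OF Pp(2)]) (rule ne)
    have FLL: "FL L v = (if v = i then 1 else 0)" for v
    proof -
      have a: "FL L v = FL (pathw P) v + s * FL (cyc D) v" by (simp add: L_def)
      have b: "FL (pathw P) v = (if v = i then 1 else 0) + (-1)^length P * (if v = last P then 1 else 0)"
        using pathw_F[OF Pp(1) sP, of v] P(3) by simp
      have c: "FL (cyc D) v = (if v = last P then 1 else 0)"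
        using cyc_F'[OF D(3,5), of v] D(6) by simp
      show ?thesis using a b c by (simp add: s_def algebra_simps)
    qed
    have Ledges: "set (map fst L) \<subseteq> edges E"
    proof -
      have "set (map fst (cyc D)) \<subseteq> edges E" using cyc_E'[OF D(1,2)] .
      then show ?thesis using pathw_edges[OF Pp(2)] unfolding L_def by simp
    qed
    have Ldist: "distinct (map fst L)"
    proof -
      have "set (map fst (pathw P)) \<inter> set (map fst (cyc D)) = {}"
      proof (safe)
        fix e assume "e \<in> set (map fst (pathw P))" "e \<in> set (map fst (cyc D))"
        moreover have "D \<noteq> []" using D(5) cp(4) by auto
        ultimately have "\<not> e \<subseteq> set C" "e \<subseteq> set D" using walkto_edges[OF P(1)] cyc_sub by auto
        then show "e \<in> {}" using D(4) by simp
      qed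
      moreover have "distinct (map fst (cyc D))" using cyc_D'[OF D(3,5)] .
      ultimately show ?thesis using pathw_distinct[OF P(2)] by (simp add: L_def)
    qed
    have "\<forall>v. (\<Sum>e\<in>edges E. if v \<in> e then XL L e else 0) = (if v = i then 1 else 0)"
      using list_lemma[OF Ledges] FLL by simp
    then have "matrix_inv (signless_laplacian E) $ i $ i = (\<Sum>e\<in>edges E. (XL L e)^2)"
      by (rule core[OF sg cardE injy])
    also have "\<dots> = SQ L" using list_sq[OF Ledges Ldist] .
    also have "\<dots> = real (length P - 1) + real (length C) / 4"
    proof -
      have sq1: "s^2 = 1" unfolding s_def by (cases "even (length P)") simp_all
      have "SQ (cyc D) = real (length C) / 4" using cyc_S'[OF D(5)] .
      then show ?thesis using sq1 by (simp add: L_def pathw_SQ)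
    qed
    finally have "matrix_inv (signless_laplacian E) $ i $ i \<noteq> real (length C) / 4"
      using lenP by simp
    then show ?thesis using False by simp
  qed
qed

end
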